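(* There exists an absolute constant $c>0$ such that the following holds. Let $k'\ge0$ be an integer, let $y_1,y_2\in\mathbb R$ with $|y_1|,|y_2|\le c\,3^{-k'}$, and let $w_1,w_2\in\mathbb C$ satisfy $|w_j|=e^{y_j}$ ($j=1,2$) and $1+w_1+w_2=0$. Then for every integer $k$ with $1\le k\le k'+1$, $$\operatorname{Re}\big(1+w_1^{3^k}+w_2^{3^k}\big)\ge 2,\quad\text{in particular}\quad |1+w_1^{3^k}+w_2^{3^k}|\ge2.$$ *)

theory Defs
  imports "HOL-Analysis.Analysis"
begin

end

theory Submission
  imports Defs
begin


lemma om: fixes s::real assumes "s = sqrt 3 / 2 \<or> s = - sqrt 3/2"
  shows "(Complex (-1/2) s)^3 = 1 \<and> 1 + Complex (-1/2) s + (Complex (-1/2) s)^2 = 0 \<and> cmod (Complex (-1/2) s) = 1"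
proof -
  have "s^2 = (sqrt 3/2)^2" using assms by (metis power2_minus minus_divide_left)
  hence s2: "s^2 = 3/4" by (simp add: power_divide)
  have s3: "s^3 = s * (3/4)" using s2 by (metis power3_eq_cube power2_eq_square mult.assoc)
  show ?thesis using s2 s3 by (simp add: complex_eq_iff power2_eq_square power3_eq_cube cmod_def algebra_simps)
qed

lemma powbound: fixes u::complex shows "cmod (u^N - 1) \<le> (1 + cmod (u - 1))^N - 1"
proof (induction N)
  case 0 then show ?case by simp
next
  case (Suc N)
  have e: "u^Suc N - 1 = u*(u^N - 1) + (u - 1)" by (simp add: algebra_simps)
  have u: "cmod u \<le> 1 + cmod (u-1)" using norm_triangle_ineq[of "u-1" 1] by simp
  have "cmod (u^Suc N - 1) \<le> cmod u * cmod (u^N - 1) + cmod (u-1)"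
    unfolding e by (metis norm_mult norm_triangle_ineq)
  also have "\<dots> \<le> (1 + cmod (u-1)) * ((1 + cmod (u - 1))^N - 1) + cmod (u-1)"
    using Suc u by (intro add_mono mult_mono) auto
  also have "\<dots> = (1 + cmod (u - 1))^Suc N - 1" by (simp add: algebra_simps)
  finally show ?case .
qed

lemma powbound2: fixes u::complex assumes "real N * cmod (u - 1) \<le> 1/4"
  shows "Re (u^N) \<ge> 1/2"
proof -
  have "(1 + cmod (u - 1))^N \<le> exp (cmod (u-1))^N"
    by (intro power_mono) (auto simp: add.commute)
  also have "\<dots> = exp (real N * cmod (u-1))" by (simp add: exp_of_nat_mult)
  also have "\<dots> \<le> 1 + 2 * (real N * cmod (u-1))"
    using assms by (intro real_exp_bound_lemma) auto
  finally have "cmod (u^N - 1) \<le> 1/2" using powbound[of u N] assms by linarith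
  moreover have "\<bar>Re (u^N - 1)\<bar> \<le> cmod (u^N - 1)" by (rule abs_Re_le_cmod)
  ultimately show ?thesis by simp
qed

lemma geom: fixes w1::complex and y1 y2 d :: real
  assumes "\<bar>y1\<bar> \<le> d" "\<bar>y2\<bar> \<le> d" "d \<le> 1/100" "cmod w1 = exp y1" "cmod (1 + w1) = exp y2"
  shows "\<exists>s. (s = sqrt 3 / 2 \<or> s = - sqrt 3/2) \<and> cmod (w1 - Complex (-1/2) s) \<le> 18 * d"
proof -
  define a where "a = Re w1" define b where "b = Im w1"
  have r1: "a^2 + b^2 = exp y1 ^2" using assms(4) unfolding a_def b_def by (metis cmod_power2)
  have r2: "(1+a)^2 + b^2 = exp y2 ^2" using assms(5) cmod_power2[of "1+w1"] unfolding a_def b_def by simp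
  have eb: "\<bar>exp y ^2 - 1\<bar> \<le> 4*d" if "\<bar>y\<bar> \<le> d" for y
  proof -
    have q: "exp y ^2 = exp (2*y)" by (metis exp_of_nat_mult of_nat_numeral)
    have "exp (2*y) \<le> exp (2*d)" using that by simp
    also have "\<dots> \<le> 1 + 2*(2*d)" using that assms(3) by (intro real_exp_bound_lemma) auto
    finally have A: "exp (2*y) \<le> 1 + 4*d" by simp
    have B: "1 + 2*y \<le> exp (2*y)" by (rule exp_ge_add_one_self)
    show ?thesis unfolding q using A B that by linarith
  qed
  have e1: "\<bar>exp y1 ^2 - 1\<bar> \<le> 4*d" using eb assms(1) by blast
  have e2: "\<bar>exp y2 ^2 - 1\<bar> \<le> 4*d" using eb assms(2) by blast
  have aeq: "a = (exp y2 ^2 - exp y1^2 - 1)/2" using r1 r2 by (simp add: power2_eq_square algebra_simps)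
  have ha: "\<bar>a + 1/2\<bar> \<le> 4*d" using aeq e1 e2 by (simp add: abs_le_iff)
  have d0: "0 \<le> d" using assms(1) by simp
  have "\<bar>a - 1/2\<bar> \<le> 2" using ha assms(3) by (simp add: abs_le_iff)
  hence "\<bar>a^2 - 1/4\<bar> \<le> 8 * d"
  proof -
    assume h: "\<bar>a - 1/2\<bar> \<le> 2"
    have "\<bar>a^2 - 1/4\<bar> = \<bar>a + 1/2\<bar> * \<bar>a - 1/2\<bar>" by (simp add: abs_mult[symmetric] power2_eq_square algebra_simps)
    also have "\<dots> \<le> (4*d) * 2" using ha h by (intro mult_mono) auto
    finally show ?thesis by simp
  qed
  hence hb2: "\<bar>b^2 - 3/4\<bar> \<le> 12 * d" using r1 e1 by (simp add: abs_le_iff)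
  have q3: "12/7 \<le> sqrt 3" by (rule real_le_rsqrt) (simp add: power2_eq_square)
  define s0 where "s0 = sqrt 3 / 2"
  have s0p: "s0 > 0" "s0^2 = 3/4" "s0 \<ge> 6/7" unfolding s0_def
    using q3 by (auto simp: power_divide)
  have hab: "\<bar>\<bar>b\<bar> - s0\<bar> \<le> 14 * d"
  proof -
    have "b^2 - 3/4 = (\<bar>b\<bar> - s0) * (\<bar>b\<bar> + s0)" using s0p
      by (simp add: power2_eq_square algebra_simps flip: abs_mult)
    hence "\<bar>b^2 - 3/4\<bar> = \<bar>\<bar>b\<bar> - s0\<bar> * (\<bar>b\<bar> + s0)" using s0p
      by (simp add: abs_mult)
    hence "\<bar>\<bar>b\<bar> - s0\<bar> * (6/7) \<le> 12 * d" using hb2 s0p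
      by (smt (verit) mult_left_mono abs_ge_zero)
    thus ?thesis by simp
  qed
  define s where "s = (if b \<ge> 0 then s0 else - s0)"
  have "\<bar>b - s\<bar> \<le> 14 * d" using hab unfolding s_def by (auto split: if_splits)
  hence "cmod (w1 - Complex (-1/2) s) \<le> 18*d"
    using cmod_le[of "w1 - Complex (-1/2) s"] ha unfolding a_def b_def by simp
  moreover have "s = sqrt 3 / 2 \<or> s = - sqrt 3/2" unfolding s_def s0_def by auto
  ultimately show ?thesis by blast
qed
lemma main: fixes w1 w2 :: complex and y1 y2 d :: real and k k' :: nat
  assumes "\<bar>y1\<bar> \<le> d" "\<bar>y2\<bar> \<le> d" "d = (1/1000) / 3^k'" "cmod w1 = exp y1" "cmod w2 = exp y2"
    "1 + w1 + w2 = 0" "1 \<le> k" "k \<le> k' + 1"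
  shows "Re (1 + w1 ^ (3 ^ k) + w2 ^ (3 ^ k)) \<ge> 2"
proof -
  have w2: "w2 = -1 - w1" using assms(6) by (simp add: algebra_simps eq_neg_iff_add_eq_0)
  have p3: "(3::real)^k' \<ge> 1" by simp
  have d00: "0 \<le> d" using assms(3) by simp
  have "d * 3^k' = 1/1000" using assms(3) by simp
  moreover have "d \<le> d * 3^k'" using d00 p3 by (simp add: mult_le_cancel_left1)
  ultimately have d0: "0 \<le> d" "d \<le> 1/100" using d00 by auto
  have "cmod (1 + w1) = exp y2" using assms(5) w2 by (metis minus_diff_eq norm_minus_cancel diff_minus_eq_add add.commute)
  then obtain s where s: "s = sqrt 3 / 2 \<or> s = - sqrt 3/2" and hs: "cmod (w1 - Complex (-1/2) s) \<le> 18 * d"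
    using geom[OF assms(1,2) d0(2) assms(4)] by blast
  define om where "om = Complex (-1/2) s"
  have o3: "om^3 = 1" and o1: "1 + om + om^2 = 0" and on: "cmod om = 1" using om[OF s] unfolding om_def by auto
  define N where "N = (3::nat)^k"
  have oN: "om ^ N = 1"
  proof -
    obtain j where "k = Suc j" using assms(7) by (cases k) auto
    hence "N = 3 * 3^j" unfolding N_def by simp
    thus ?thesis using o3 by (simp add: power_mult)
  qed
  have Nd: "real N * (18 * d) \<le> 1/4"
  proof -
    have "real N \<le> 3^(k'+1)" unfolding N_def using power_increasing[OF assms(8), of "3::real"] by simp
    hence "real N * (18*d) \<le> 3^(k'+1) * (18 * d)" using d0 by (intro mult_right_mono) auto
    also have "\<dots> = 54/1000" using assms(3) by simp
    finally show ?thesis by (simp add: algebra_simps)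
  qed
  define u1 where "u1 = w1 * om^2"
  define u2 where "u2 = w2 * om"
  have "u1 - 1 = om^2 * (w1 - om)" unfolding u1_def using o3 by (simp add: algebra_simps power2_eq_square power3_eq_cube)
  hence hu1: "cmod (u1 - 1) \<le> 18 * d" using hs on unfolding om_def by (simp add: norm_mult norm_power)
  have "u2 - 1 = om * (om - w1)" unfolding u2_def w2 using o3 o1
    by (simp add: algebra_simps power2_eq_square power3_eq_cube) (metis add.commute add.left_commute add_diff_cancel_left' diff_add_cancel eq_neg_iff_add_eq_0 minus_add_distrib)
  hence hu2: "cmod (u2 - 1) \<le> 18 * d" using hs on unfolding om_def by (simp add: norm_mult norm_minus_commute)
  have r1: "Re (u1^N) \<ge> 1/2" using Nd hu1 by (intro powbound2) (smt (verit) mult_left_mono of_nat_0_le_iff)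
  have r2: "Re (u2^N) \<ge> 1/2" using Nd hu2 by (intro powbound2) (smt (verit) mult_left_mono of_nat_0_le_iff)
  have "w1 = u1 * om" unfolding u1_def using o3 by (simp add: power2_eq_square power3_eq_cube mult.assoc)
  hence e1: "w1^N = u1^N" using oN by (simp add: power_mult_distrib)
  have "w2 = u2 * om^2" unfolding u2_def using o3 by (simp add: power2_eq_square power3_eq_cube mult.assoc)
  hence e2: "w2^N = u2^N" using oN by (simp add: power_mult_distrib flip: power_mult) (metis power_mult power_one mult.commute)
  show ?thesis using r1 r2 e1 e2 unfolding N_def by simp
qed
theorem lemma24:
  shows "\<exists>c::real. c > 0 \<and>
    (\<forall>(k'::nat) (y1::real) (y2::real) (w1::complex) (w2::complex).
       \<bar>y1\<bar> \<le> c * 3 powi (- int k') \<longrightarrow> \<bar>y2\<bar> \<le> c * 3 powi (- int k') \<longrightarrow>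
       cmod w1 = exp y1 \<longrightarrow> cmod w2 = exp y2 \<longrightarrow> 1 + w1 + w2 = 0 \<longrightarrow>
       (\<forall>k::nat. 1 \<le> k \<and> k \<le> k' + 1 \<longrightarrow>
          Re (1 + w1 ^ (3 ^ k) + w2 ^ (3 ^ k)) \<ge> 2 \<and>
          cmod (1 + w1 ^ (3 ^ k) + w2 ^ (3 ^ k)) \<ge> 2))"
  proof (intro exI[of _ "1/1000"] conjI allI impI)
  fix k' :: nat and y1 y2 :: real and w1 w2 :: complex and k :: nat
  assume h: "\<bar>y1\<bar> \<le> 1/1000 * 3 powi (- int k')" "\<bar>y2\<bar> \<le> 1/1000 * 3 powi (- int k')"
    "cmod w1 = exp y1" "cmod w2 = exp y2" "1 + w1 + w2 = 0" "1 \<le> k \<and> k \<le> k' + 1"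
  have A: "(3::real) powi (- int k') = inverse (3^k')"
    by (metis power_int_minus power_int_of_nat)
  have pe: "(1/1000::real) * 3 powi (- int k') = (1/1000) / 3^k'"
    unfolding A by (rule divide_inverse[symmetric])
  have r: "Re (1 + w1 ^ (3 ^ k) + w2 ^ (3 ^ k)) \<ge> 2"
  proof (rule main[of y1 "(1/1000) / 3^k'" y2 k' w1 w2 k])
    show "\<bar>y1\<bar> \<le> (1/1000) / 3^k'" using h(1) unfolding pe .
    show "\<bar>y2\<bar> \<le> (1/1000) / 3^k'" using h(2) unfolding pe .
  qed (use h in simp_all)
  show "Re (1 + w1 ^ (3 ^ k) + w2 ^ (3 ^ k)) \<ge> 2" by (rule r)
  show "cmod (1 + w1 ^ (3 ^ k) + w2 ^ (3 ^ k)) \<ge> 2" using r complex_Re_le_cmod[of "1 + w1 ^ (3 ^ k) + w2 ^ (3 ^ k)"] by linarith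
qed simp

end
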